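(* $AQ_4$ is fractional strongly maximally matched and fractional strongly super matched; that is, $fsmp(AQ_4)=7$, and for every set $F\subseteq V(AQ_4)\cup E(AQ_4)$ with $|F|=7$ such that $AQ_4-F$ has no fractional perfect matching, the graph $AQ_4-F$ has an isolated vertex.
   Context: The $n$-dimensional augmented cube $AQ_n$ ($n\geq 1$) has vertex set all binary strings $u_1u_2\cdots u_n$. $AQ_1\cong K_2$ on vertices $0,1$. For $n\geq 2$, $AQ_n$ consists of a copy $AQ^0_{n-1}$ of $AQ_{n-1}$ with $0$ prefixed to every label and a copy $AQ^1_{n-1}$ with $1$ prefixed, plus the following edges: $0u_1\cdots u_{n-1}$ is adjacent to $1v_1\cdots v_{n-1}$ iff either $u_i=v_i$ for all $i$ (cross edge) or $u_i\neq v_i$ for all $i$ (complement edge). $AQ_4$ is $7$-regular on $16$ vertices. For $F\subseteq V(G)\cup E(G)$, $G-F$ denotes $G$ with the vertices and edges of $F$ deleted. A fractional perfect matching of $G$ is $f:E(G)\to[0,1]$ with $\sum_{e\ni v}f(e)=1$ for every vertex $v$. A fractional strong matching preclusion (FSMP) set is $F\subseteq V(G)\cup E(G)$ with $G-F$ having no fractional perfect matching; $fsmp(G)$ is the minimum size of an FSMP set, and an FSMP set of that size is optimal. $G$ is fractional strongly maximally matched if $fsmp(G)=\delta(G)$, and fractional strongly super matched if in addition $G-F$ has an isolated vertex for every optimal FSMP set $F$. *)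

theory Defs
  imports Complex_Main
begin

text \<open>Simple graphs are given as a pair (V, E) of a vertex set and a set of
  edges, each edge being a 2-element subset of V.\<close>

type_synonym 'a graph = "'a set \<times> 'a set set"

definition verts :: "'a graph \<Rightarrow> 'a set" where "verts G = fst G"
definition edges :: "'a graph \<Rightarrow> 'a set set" where "edges G = snd G"

text \<open>First letter = copy index; equal first letters: adjacency inside the copy;
  different first letters: cross edge (u = v) or complement edge (all positions differ).\<close>

fun aq_adj :: "bool list \<Rightarrow> bool list \<Rightarrow> bool" where
  "aq_adj (x # u) (y # v) =
     (length u = length v \<and>
      (if x = y then aq_adj u v else (u = v \<or> list_all2 (\<noteq>) u v)))"
| "aq_adj _ _ = False"

definition AQ :: "nat \<Rightarrow> bool list graph" where
  "AQ n = ({u. length u = n},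
           {{u, v} | u v. length u = n \<and> length v = n \<and> aq_adj u v})"

definition degree :: "'a graph \<Rightarrow> 'a \<Rightarrow> nat" where
  "degree G v = card {e \<in> edges G. v \<in> e}"

definition min_degree :: "'a graph \<Rightarrow> nat" where
  "min_degree G = Min (degree G ` verts G)"

definition delete :: "'a graph \<Rightarrow> 'a set \<Rightarrow> 'a set set \<Rightarrow> 'a graph" where
  "delete G FV FE = (verts G - FV, {e \<in> edges G. e \<notin> FE \<and> e \<inter> FV = {}})"

definition frac_perfect_matching :: "'a graph \<Rightarrow> ('a set \<Rightarrow> real) \<Rightarrow> bool" where
  "frac_perfect_matching G f \<longleftrightarrow>
     (\<forall>e \<in> edges G. 0 \<le> f e \<and> f e \<le> 1) \<and>
     (\<forall>v \<in> verts G. (\<Sum>e \<in> {e \<in> edges G. v \<in> e}. f e) = 1)"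

definition has_fpm :: "'a graph \<Rightarrow> bool" where
  "has_fpm G \<longleftrightarrow> (\<exists>f. frac_perfect_matching G f)"

text \<open>F = FV \<union> FE with FV \<subseteq> V(G), FE \<subseteq> E(G); |F| = |FV| + |FE|.\<close>

definition fsmp_set :: "'a graph \<Rightarrow> 'a set \<Rightarrow> 'a set set \<Rightarrow> bool" where
  "fsmp_set G FV FE \<longleftrightarrow>
     FV \<subseteq> verts G \<and> FE \<subseteq> edges G \<and> \<not> has_fpm (delete G FV FE)"

definition fsmp :: "'a graph \<Rightarrow> nat" where
  "fsmp G = (LEAST k. \<exists>FV FE. fsmp_set G FV FE \<and> finite FV \<and> finite FE
                             \<and> card FV + card FE = k)"

definition optimal_fsmp_set :: "'a graph \<Rightarrow> 'a set \<Rightarrow> 'a set set \<Rightarrow> bool" where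
  "optimal_fsmp_set G FV FE \<longleftrightarrow> fsmp_set G FV FE \<and> finite FV \<and> finite FE
      \<and> card FV + card FE = fsmp G"

definition has_isolated_vertex :: "'a graph \<Rightarrow> bool" where
  "has_isolated_vertex G \<longleftrightarrow> (\<exists>v \<in> verts G. \<forall>e \<in> edges G. v \<notin> e)"

definition frac_strongly_maximally_matched :: "'a graph \<Rightarrow> bool" where
  "frac_strongly_maximally_matched G \<longleftrightarrow> fsmp G = min_degree G"

definition frac_strongly_super_matched :: "'a graph \<Rightarrow> bool" where
  "frac_strongly_super_matched G \<longleftrightarrow> frac_strongly_maximally_matched G \<and>
     (\<forall>FV FE. optimal_fsmp_set G FV FE \<longrightarrow> has_isolated_vertex (delete G FV FE))"

end

theory Submission
  imports Defs
begin


lemma hall_crit_step: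
  fixes A S :: "'a set" and N :: "'a \<Rightarrow> 'b set"
  assumes fin: "finite A" and finN: "\<forall>a\<in>A. finite (N a)"
    and H: "\<forall>S\<subseteq>A. card S \<le> card (\<Union>(N ` S))"
    and S: "S \<subseteq> A" "card (\<Union>(N ` S)) = card S"
    and T: "T \<subseteq> A - S"
  shows "card T \<le> card (\<Union>((\<lambda>a. N a - \<Union>(N ` S)) ` T))"
proof -
  define NS where "NS = \<Union>(N ` S)"
  have finS: "finite S" using finite_subset[OF S(1) fin] .
  have finT: "finite T" using finite_subset[OF _ fin] T by blast
  have finNS: "finite NS" unfolding NS_def using finS finN S(1) by (intro finite_UN_I) auto
  have fU: "finite (\<Union>(N ` T))" using finT finN T by (intro finite_UN_I) auto
  have eq: "\<Union>(N ` (T \<union> S)) = \<Union>((\<lambda>a. N a - NS) ` T) \<union> NS" unfolding NS_def by auto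
  have disj: "\<Union>((\<lambda>a. N a - NS) ` T) \<inter> NS = {}" by blast
  have f2: "finite (\<Union>((\<lambda>a. N a - NS) ` T))" by (rule finite_subset[OF _ fU]) auto
  have "T \<inter> S = {}" using T by blast
  then have "card T + card S = card (T \<union> S)"
    using finT finS by (simp add: card_Un_disjoint)
  also have "\<dots> \<le> card (\<Union>(N ` (T \<union> S)))" using T S(1) by (intro H[rule_format]) blast
  also have "\<dots> = card (\<Union>((\<lambda>a. N a - NS) ` T)) + card NS"
    unfolding eq by (rule card_Un_disjoint[OF f2 finNS disj])
  finally show ?thesis using S(2) unfolding NS_def by simp
qed

lemma hall_noncrit_step:
  fixes A T :: "'a set" and N :: "'a \<Rightarrow> 'b set"
  assumes fin: "finite A" and finN: "\<forall>a\<in>A. finite (N a)"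
    and H: "\<forall>S\<subseteq>A. card S \<le> card (\<Union>(N ` S))"
    and NC: "\<forall>S. S \<subset> A \<and> S \<noteq> {} \<longrightarrow> card (\<Union>(N ` S)) \<noteq> card S"
    and a: "a \<in> A" and T: "T \<subseteq> A - {a}"
  shows "card T \<le> card (\<Union>((\<lambda>x. N x - {b}) ` T))"
proof (cases "T = {}")
  case True then show ?thesis by simp
next
  case Tne: False
  have finT: "finite T" using finite_subset[OF _ fin] T by blast
  have fU: "finite (\<Union>(N ` T))" using finT finN T by (intro finite_UN_I) auto
  have "T \<subset> A" using T a by blast
  then have "card (\<Union>(N ` T)) \<noteq> card T" using NC Tne by blast
  moreover have "card T \<le> card (\<Union>(N ` T))" using T by (intro H[rule_format]) blast
  ultimately have lt: "card T < card (\<Union>(N ` T))" by simp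
  have "\<Union>((\<lambda>x. N x - {b}) ` T) = \<Union>(N ` T) - {b}" by blast
  then have "card (\<Union>((\<lambda>x. N x - {b}) ` T)) \<ge> card (\<Union>(N ` T)) - 1"
    using fU by (simp add: card_Diff_singleton_if)
  then show ?thesis using lt by linarith
qed

lemma hall:
  fixes A :: "'a set" and N :: "'a \<Rightarrow> 'b set"
  assumes "finite A" "\<forall>a\<in>A. finite (N a)" "\<forall>S\<subseteq>A. card S \<le> card (\<Union>(N ` S))"
  shows "\<exists>f. inj_on f A \<and> (\<forall>a\<in>A. f a \<in> N a)"
  using assms
proof (induction "card A" arbitrary: A N rule: less_induct)
  case less
  note fin = less.prems(1) and finN = less.prems(2) and H = less.prems(3)
  show ?case
  proof (cases "A = {}")
    case True then show ?thesis by auto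
  next
    case nonempty: False
    show ?thesis
    proof (cases "\<exists>S. S \<subset> A \<and> S \<noteq> {} \<and> card (\<Union>(N ` S)) = card S")
      case True
      then obtain S where S: "S \<subset> A" "S \<noteq> {}" "card (\<Union>(N ` S)) = card S" by blast
      define NS where "NS = \<Union>(N ` S)"
      have SA: "S \<subseteq> A" using S(1) by blast
      have finS: "finite S" using finite_subset[OF SA fin] .
      have c1: "card S < card A" using S(1) fin by (simp add: psubset_card_mono)
      have h1: "\<forall>a\<in>S. finite (N a)" using finN SA by blast
      have h2: "\<forall>T\<subseteq>S. card T \<le> card (\<Union>(N ` T))" using H SA by blast
      obtain f1 where f1: "inj_on f1 S" "\<forall>a\<in>S. f1 a \<in> N a"
        using less.hyps[OF c1 finS h1 h2] by blast
      define N2 where "N2 = (\<lambda>a. N a - NS)"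
      have c2: "card (A - S) < card A"
      proof -
        have "card (A - S) = card A - card S" using SA finS by (simp add: card_Diff_subset)
        moreover have "card S > 0" using finS S(2) by auto
        moreover have "card S \<le> card A" using SA fin by (simp add: card_mono)
        ultimately show ?thesis by linarith
      qed
      have h3: "finite (A - S)" using fin by blast
      have h4: "\<forall>a\<in>A - S. finite (N2 a)" using finN unfolding N2_def by blast
      have h5: "\<forall>T\<subseteq>A - S. card T \<le> card (\<Union>(N2 ` T))"
        unfolding N2_def NS_def using hall_crit_step[OF fin finN H SA S(3)] by blast
      obtain f2 where f2: "inj_on f2 (A - S)" "\<forall>a\<in>A - S. f2 a \<in> N2 a"
        using less.hyps[OF c2 h3 h4 h5] by blast
      define f where "f = (\<lambda>a. if a \<in> S then f1 a else f2 a)"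
      have "inj_on f A"
        unfolding inj_on_def
      proof (intro ballI impI)
        fix x y assume xy: "x \<in> A" "y \<in> A" "f x = f y"
        show "x = y"
        proof (cases "x \<in> S"; cases "y \<in> S")
          assume "x \<in> S" "y \<in> S" then show ?thesis using xy f1(1) unfolding f_def inj_on_def by auto
        next
          assume "x \<in> S" "y \<notin> S"
          then have "f1 x \<in> NS" "f2 y \<notin> NS" using f1(2) f2(2) xy unfolding NS_def N2_def by auto
          then show ?thesis using xy \<open>x \<in> S\<close> \<open>y \<notin> S\<close> unfolding f_def by auto
        next
          assume "x \<notin> S" "y \<in> S"
          then have "f1 y \<in> NS" "f2 x \<notin> NS" using f1(2) f2(2) xy unfolding NS_def N2_def by auto
          then show ?thesis using xy \<open>x \<notin> S\<close> \<open>y \<in> S\<close> unfolding f_def by auto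
        next
          assume "x \<notin> S" "y \<notin> S" then show ?thesis using xy f2(1) unfolding f_def inj_on_def by auto
        qed
      qed
      moreover have "\<forall>a\<in>A. f a \<in> N a" using f1 f2 unfolding f_def N2_def by auto
      ultimately show ?thesis by blast
    next
      case False
      then have NC: "\<forall>S. S \<subset> A \<and> S \<noteq> {} \<longrightarrow> card (\<Union>(N ` S)) \<noteq> card S" by blast
      obtain a where a: "a \<in> A" using nonempty by blast
      have "card {a} \<le> card (\<Union>(N ` {a}))" using a by (intro H[rule_format]) blast
      then have "N a \<noteq> {}" by auto
      then obtain b where b: "b \<in> N a" by blast
      define N' where "N' = (\<lambda>x. N x - {b})"
      have c3: "card (A - {a}) < card A" by (rule card_Diff1_less[OF fin a])
      have h6: "finite (A - {a})" using fin by blast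
      have h7: "\<forall>x\<in>A - {a}. finite (N' x)" using finN unfolding N'_def by blast
      have h8: "\<forall>T\<subseteq>A - {a}. card T \<le> card (\<Union>(N' ` T))"
        unfolding N'_def using hall_noncrit_step[OF fin finN H NC a] by blast
      obtain f' where f': "inj_on f' (A - {a})" "\<forall>x\<in>A - {a}. f' x \<in> N' x"
        using less.hyps[OF c3 h6 h7 h8] by blast
      define f where "f = f'(a := b)"
      have "inj_on f A"
        unfolding inj_on_def
      proof (intro ballI impI)
        fix x y assume xy: "x \<in> A" "y \<in> A" "f x = f y"
        show "x = y"
        proof (cases "x = a"; cases "y = a")
          assume "x \<noteq> a" "y \<noteq> a" then show ?thesis using xy f'(1) unfolding f_def inj_on_def by auto
        next
          assume "x = a" "y \<noteq> a" then show ?thesis using xy f'(2) unfolding f_def N'_def by auto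
        next
          assume "x \<noteq> a" "y = a" then show ?thesis using xy f'(2) unfolding f_def N'_def by force
        qed simp
      qed
      moreover have "\<forall>x\<in>A. f x \<in> N x" using f' b unfolding f_def N'_def by auto
      ultimately show ?thesis by blast
    qed
  qed
qed

lemma fpm_from_perm:
  fixes H :: "'a graph" and \<sigma> :: "'a \<Rightarrow> 'a"
  assumes finV: "finite (verts H)" and finE: "finite (edges H)"
    and bij: "bij_betw \<sigma> (verts H) (verts H)"
    and ed: "\<forall>w\<in>verts H. {w, \<sigma> w} \<in> edges H \<and> \<sigma> w \<noteq> w"
    and two: "\<forall>e\<in>edges H. \<exists>a b. e = {a,b}"
  shows "has_fpm H"
proof -
  define W where "W = verts H"
  define c where "c = (\<lambda>e. card {w \<in> W. {w, \<sigma> w} = e})"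
  define f where "f = (\<lambda>e. real (c e) / 2)"
  have cle: "c e \<le> 2" if eH: "e \<in> edges H" for e
  proof -
    obtain a b where e: "e = {a,b}" using bspec[OF two eH] by blast
    have "{w \<in> W. {w, \<sigma> w} = e} \<subseteq> {a,b}" using e by auto
    then have "c e \<le> card {a,b}" unfolding c_def by (intro card_mono) auto
    also have "\<dots> \<le> 2" by (simp add: card_insert_if)
    finally show ?thesis .
  qed
  have inj: "inj_on \<sigma> W" using bij unfolding W_def bij_betw_def by blast
  have sum1: "(\<Sum>e \<in> {e \<in> edges H. v \<in> e}. f e) = 1" if v: "v \<in> W" for v
  proof -
    have finW: "finite W" using finV unfolding W_def .
    have fin1: "finite {e \<in> edges H. v \<in> e}" using finE by simp
    have vim: "v \<in> \<sigma> ` W" using bij v unfolding W_def bij_betw_def by blast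
    have u1: "inv_into W \<sigma> v \<in> W" by (rule inv_into_into[OF vim])
    have u2: "\<sigma> (inv_into W \<sigma> v) = v" by (rule f_inv_into_f[OF vim])
    have disj: "\<forall>e1\<in>{e \<in> edges H. v \<in> e}. \<forall>e2\<in>{e \<in> edges H. v \<in> e}. e1 \<noteq> e2 \<longrightarrow>
        {w \<in> W. {w, \<sigma> w} = e1} \<inter> {w \<in> W. {w, \<sigma> w} = e2} = {}" by blast
    have fin2: "\<forall>e\<in>{e \<in> edges H. v \<in> e}. finite {w \<in> W. {w, \<sigma> w} = e}" using finW by simp
    have "(\<Sum>e \<in> {e \<in> edges H. v \<in> e}. c e) = card (\<Union>e \<in> {e \<in> edges H. v \<in> e}. {w \<in> W. {w, \<sigma> w} = e})"
      unfolding c_def by (rule card_UN_disjoint[symmetric, OF fin1 fin2 disj])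
    also have "(\<Union>e \<in> {e \<in> edges H. v \<in> e}. {w \<in> W. {w, \<sigma> w} = e}) = {w \<in> W. w = v \<or> \<sigma> w = v}"
    proof (intro equalityI subsetI)
      fix w assume "w \<in> (\<Union>e \<in> {e \<in> edges H. v \<in> e}. {w \<in> W. {w, \<sigma> w} = e})"
      then show "w \<in> {w \<in> W. w = v \<or> \<sigma> w = v}" by blast
    next
      fix w assume w: "w \<in> {w \<in> W. w = v \<or> \<sigma> w = v}"
      then have "w \<in> W" "{w,\<sigma> w} \<in> edges H" "v \<in> {w, \<sigma> w}" using ed unfolding W_def by auto
      then show "w \<in> (\<Union>e \<in> {e \<in> edges H. v \<in> e}. {w \<in> W. {w, \<sigma> w} = e})" by blast
    qed
    also have "{w \<in> W. w = v \<or> \<sigma> w = v} = {v, inv_into W \<sigma> v}"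
    proof (intro equalityI subsetI)
      fix w assume w: "w \<in> {w \<in> W. w = v \<or> \<sigma> w = v}"
      show "w \<in> {v, inv_into W \<sigma> v}"
      proof (cases "w = v")
        case True then show ?thesis by simp
      next
        case False
        then have "w \<in> W" "\<sigma> w = v" using w by auto
        then have "w = inv_into W \<sigma> v"
          by (intro inj_onD[OF inj _ _ u1]) (simp_all add: u2)
        then show ?thesis by simp
      qed
    next
      fix w assume w: "w \<in> {v, inv_into W \<sigma> v}"
      then show "w \<in> {w \<in> W. w = v \<or> \<sigma> w = v}"
      proof
        assume "w = v" then show ?thesis using v by simp
      next
        assume "w \<in> {inv_into W \<sigma> v}" then show ?thesis using u1 u2 by simp
      qed
    qed
    also have "card {v, inv_into W \<sigma> v} = 2"
    proof -
      have "inv_into W \<sigma> v \<noteq> v"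
      proof
        assume eq: "inv_into W \<sigma> v = v"
        then have "\<sigma> v = v" using u2 by simp
        moreover have "\<sigma> v \<noteq> v" using ed v unfolding W_def by blast
        ultimately show False by blast
      qed
      then show ?thesis by simp
    qed
    finally have "(\<Sum>e \<in> {e \<in> edges H. v \<in> e}. c e) = 2" .
    then have "(\<Sum>e \<in> {e \<in> edges H. v \<in> e}. real (c e)) = 2"
      by (simp flip: of_nat_sum)
    then show ?thesis unfolding f_def by (simp add: sum_divide_distrib[symmetric])
  qed
  have "frac_perfect_matching H f"
    unfolding frac_perfect_matching_def
  proof (intro conjI ballI)
    fix e assume "e \<in> edges H"
    then show "0 \<le> f e" "f e \<le> 1" using cle[of e] unfolding f_def by auto
  next
    fix v assume "v \<in> verts H" then show "(\<Sum>e \<in> {e \<in> edges H. v \<in> e}. f e) = 1"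
      using sum1 unfolding W_def by blast
  qed
  then show ?thesis unfolding has_fpm_def by blast
qed

lemma fpm_from_hallc:
  fixes H :: "'a graph"
  assumes finV: "finite (verts H)" and finE: "finite (edges H)"
    and two: "\<forall>e\<in>edges H. \<exists>a b. a \<noteq> b \<and> e = {a,b} \<and> a \<in> verts H \<and> b \<in> verts H"
    and hc: "\<forall>S\<subseteq>verts H. card S \<le> card {w. \<exists>u\<in>S. {u,w} \<in> edges H}"
  shows "has_fpm H"
proof -
  define N where "N = (\<lambda>a. {w. {a,w} \<in> edges H})"
  have Nsub: "N a \<subseteq> verts H" for a
  proof
    fix w assume "w \<in> N a"
    then obtain x y where "{a,w} = {x,y}" "x \<in> verts H" "y \<in> verts H" using two unfolding N_def by blast
    then show "w \<in> verts H" by (metis doubleton_eq_iff)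
  qed
  have finN: "\<forall>a\<in>verts H. finite (N a)" using Nsub finV finite_subset by blast
  have "\<forall>S\<subseteq>verts H. card S \<le> card (\<Union>(N ` S))"
  proof (intro allI impI)
    fix S assume "S \<subseteq> verts H"
    moreover have "\<Union>(N ` S) = {w. \<exists>u\<in>S. {u,w} \<in> edges H}" unfolding N_def by auto
    ultimately show "card S \<le> card (\<Union>(N ` S))" using hc by simp
  qed
  then obtain \<sigma> where s: "inj_on \<sigma> (verts H)" "\<forall>a\<in>verts H. \<sigma> a \<in> N a"
    using hall[OF finV finN] by blast
  have img: "\<sigma> ` verts H \<subseteq> verts H" using s(2) Nsub by blast
  have "\<sigma> ` verts H = verts H" using endo_inj_surj[OF finV img s(1)] .
  then have bij: "bij_betw \<sigma> (verts H) (verts H)" using s(1) unfolding bij_betw_def by blast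
  have ed: "\<forall>w\<in>verts H. {w, \<sigma> w} \<in> edges H \<and> \<sigma> w \<noteq> w"
  proof
    fix w assume w: "w \<in> verts H"
    then have e: "{w, \<sigma> w} \<in> edges H" using s(2) unfolding N_def by blast
    moreover have "\<sigma> w \<noteq> w"
    proof
      assume "\<sigma> w = w"
      then have "{w} \<in> edges H" using e by simp
      then obtain a b where "a \<noteq> b" "{w} = {a,b}" using two by blast
      then show False by (metis insert_absorb insert_iff insert_not_empty singleton_insert_inj_eq)
    qed
    ultimately show "{w, \<sigma> w} \<in> edges H \<and> \<sigma> w \<noteq> w" by blast
  qed
  have two': "\<forall>e\<in>edges H. \<exists>a b. e = {a,b}" using two by blast
  show ?thesis using fpm_from_perm[OF finV finE bij ed two'] .
qed



definition V4 :: "bool list set" where "V4 = {u. length u = 4}"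

definition vl :: "bool list list" where
 "vl = [[False,False,False,False],[False,False,False,True],[False,False,True,False],[False,False,True,True],
        [False,True,False,False],[False,True,False,True],[False,True,True,False],[False,True,True,True],
        [True,False,False,False],[True,False,False,True],[True,False,True,False],[True,False,True,True],
        [True,True,False,False],[True,True,False,True],[True,True,True,False],[True,True,True,True]]"

lemma set_vl: "set vl = V4"
proof
  show "set vl \<subseteq> V4" unfolding vl_def V4_def by auto
  show "V4 \<subseteq> set vl"
  proof
    fix u assume "u \<in> V4"
    then obtain a b c d where "u = [a,b,c,d]" unfolding V4_def
      by (auto simp: length_Suc_conv numeral_eq_Suc)
    then show "u \<in> set vl" unfolding vl_def by (cases a; cases b; cases c; cases d) auto
  qed
qed

lemma distinct_vl: "distinct vl" unfolding vl_def by simp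

lemma finite_V4: "finite V4" using set_vl by (metis List.finite_set)

lemma aq_adj_len: "aq_adj u v \<Longrightarrow> length u = length v"
  by (cases "(u,v)" rule: aq_adj.cases) auto

lemma list_all2_neq_sym: "list_all2 (\<noteq>) u v = list_all2 (\<noteq>) v (u::bool list)"
  by (auto simp: list_all2_conv_all_nth)

lemma aq_adj_sym: "aq_adj u v = aq_adj v u"
  by (induction u v rule: aq_adj.induct) (auto simp: list_all2_conv_all_nth)

lemma aq_adj_irrefl: "\<not> aq_adj u u"
  by (induction u) auto

lemma verts_AQ: "verts (AQ 4) = V4" unfolding verts_def AQ_def V4_def by simp

lemma edges_AQ: "edges (AQ 4) = {{u, v} | u v. u \<in> V4 \<and> v \<in> V4 \<and> aq_adj u v}"
  unfolding edges_def AQ_def V4_def by simp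

lemma E_mem: "{a,b} \<in> edges (AQ 4) \<longleftrightarrow> a \<in> V4 \<and> b \<in> V4 \<and> aq_adj a b"
proof
  assume "{a,b} \<in> edges (AQ 4)"
  then obtain u v where uv: "{a,b} = {u,v}" "u \<in> V4" "v \<in> V4" "aq_adj u v" unfolding edges_AQ by blast
  then have "(a = u \<and> b = v) \<or> (a = v \<and> b = u)" by (metis doubleton_eq_iff)
  then show "a \<in> V4 \<and> b \<in> V4 \<and> aq_adj a b" using uv aq_adj_sym by metis
next
  assume "a \<in> V4 \<and> b \<in> V4 \<and> aq_adj a b" then show "{a,b} \<in> edges (AQ 4)" unfolding edges_AQ by blast
qed

lemma E_form: "e \<in> edges (AQ 4) \<Longrightarrow> \<exists>a b. e = {a,b} \<and> a \<noteq> b \<and> a \<in> V4 \<and> b \<in> V4 \<and> aq_adj a b"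
  unfolding edges_AQ using aq_adj_irrefl by blast

lemma finite_E: "finite (edges (AQ 4))"
proof (rule finite_subset)
  show "edges (AQ 4) \<subseteq> Pow V4" using E_form by blast
  show "finite (Pow V4)" using finite_V4 by simp
qed

definition Nb :: "bool list \<Rightarrow> bool list set" where "Nb v = {w \<in> V4. aq_adj v w}"

lemma card_Nb: assumes "v \<in> V4" shows "card (Nb v) = 7"
proof -
  have "Nb v = set (filter (aq_adj v) vl)" unfolding Nb_def set_vl[symmetric] by auto
  then have "card (Nb v) = length (filter (aq_adj v) vl)"
    using distinct_card[OF distinct_filter[OF distinct_vl]] by metis
  moreover have "\<forall>v\<in>set vl. length (filter (aq_adj v) vl) = 7" unfolding vl_def by code_simp
  ultimately show ?thesis using assms set_vl by simp
qed


lemma Nb_sub: "Nb v \<subseteq> V4" unfolding Nb_def by blast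
lemma finite_Nb: "finite (Nb v)" using finite_subset[OF Nb_sub finite_V4] .
lemma v_notin_Nb: "v \<notin> Nb v" unfolding Nb_def using aq_adj_irrefl by blast

definition cN :: "bool list set \<Rightarrow> bool list set" where
  "cN X = {w \<in> V4. w \<in> X \<or> (\<exists>x\<in>X. aq_adj x w)}"
definition eX :: "bool list set \<Rightarrow> nat" where
  "eX X = card {e \<in> edges (AQ 4). e \<subseteq> X}"
definition DS :: "bool list set \<Rightarrow> bool list set" where
  "DS X = {w \<in> X. \<exists>y\<in>X. aq_adj w y}"
definition okS :: "bool list set \<Rightarrow> bool" where
  "okS X = (\<forall>w\<in>X. card (Nb w \<inter> X) \<le> 1)"
definition QS :: "bool list set \<Rightarrow> bool" where
  "QS X = (2 \<le> card X \<longrightarrow> 2 * card X + 7 \<le> eX X + card (cN X))"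

lemma cN_sub: "cN X \<subseteq> V4" unfolding cN_def by blast
lemma cN_insert: "cN (insert v X) = cN X \<union> cN {v}" unfolding cN_def by auto

lemma eX_insert:
  assumes v: "v \<in> V4" "v \<notin> X" and X: "X \<subseteq> V4"
  shows "eX (insert v X) = eX X + card (Nb v \<inter> X)"
proof -
  define A where "A = {e \<in> edges (AQ 4). e \<subseteq> X}"
  define g where "g = (\<lambda>w. {v, w})"
  have eq: "{e \<in> edges (AQ 4). e \<subseteq> insert v X} = A \<union> g ` (Nb v \<inter> X)"
  proof (intro equalityI subsetI)
    fix e assume e: "e \<in> {e \<in> edges (AQ 4). e \<subseteq> insert v X}"
    then obtain a b where ab: "e = {a,b}" "a \<noteq> b" "a \<in> V4" "b \<in> V4" "aq_adj a b" using E_form by blast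
    show "e \<in> A \<union> g ` (Nb v \<inter> X)"
    proof (cases "v \<in> e")
      case False then show ?thesis using e unfolding A_def by blast
    next
      case True
      then have "a = v \<or> b = v" using ab by blast
      then show ?thesis
      proof
        assume "a = v"
        then have "b \<in> Nb v \<inter> X" using ab e unfolding Nb_def by auto
        then show ?thesis unfolding g_def using ab \<open>a = v\<close> by blast
      next
        assume "b = v"
        then have "a \<in> Nb v \<inter> X" using ab e aq_adj_sym unfolding Nb_def by auto
        then show ?thesis unfolding g_def using ab \<open>b = v\<close> by blast
      qed
    qed
  next
    fix e assume "e \<in> A \<union> g ` (Nb v \<inter> X)"
    then show "e \<in> {e \<in> edges (AQ 4). e \<subseteq> insert v X}"
    proof
      assume "e \<in> A" then show ?thesis unfolding A_def by blast
    next
      assume "e \<in> g ` (Nb v \<inter> X)"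
      then obtain w where w: "w \<in> Nb v" "w \<in> X" "e = {v,w}" unfolding g_def by blast
      then have "e \<in> edges (AQ 4)" using E_mem v unfolding Nb_def by blast
      then show ?thesis using w by blast
    qed
  qed
  have finA: "finite A" unfolding A_def using finite_E by simp
  have fin2: "finite (g ` (Nb v \<inter> X))" using finite_Nb by simp
  have disj: "A \<inter> g ` (Nb v \<inter> X) = {}" unfolding A_def g_def using v by blast
  have inj: "inj_on g (Nb v \<inter> X)" unfolding g_def inj_on_def using v by (metis IntD2 doubleton_eq_iff)
  have "eX (insert v X) = card (A \<union> g ` (Nb v \<inter> X))" unfolding eX_def eq ..
  also have "\<dots> = card A + card (g ` (Nb v \<inter> X))" by (rule card_Un_disjoint[OF finA fin2 disj])
  also have "card (g ` (Nb v \<inter> X)) = card (Nb v \<inter> X)" by (rule card_image[OF inj])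
  finally show ?thesis unfolding eX_def A_def .
qed

lemma DS_insert:
  assumes v: "v \<in> V4" "v \<notin> X" and X: "X \<subseteq> V4"
  shows "DS (insert v X) = (if Nb v \<inter> X = {} then DS X else DS X \<union> ({v} \<union> (Nb v \<inter> X)))"
  using assms aq_adj_sym aq_adj_irrefl unfolding DS_def Nb_def by (auto; blast)

lemma okS_mono: "okS B \<Longrightarrow> A \<subseteq> B \<Longrightarrow> okS A"
  unfolding okS_def
proof (intro ballI)
  fix w assume ok: "\<forall>w\<in>B. card (Nb w \<inter> B) \<le> 1" and AB: "A \<subseteq> B" and w: "w \<in> A"
  have "card (Nb w \<inter> A) \<le> card (Nb w \<inter> B)" using AB finite_Nb by (intro card_mono) auto
  then show "card (Nb w \<inter> A) \<le> 1" using ok AB w by force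
qed

lemma okS_insert:
  assumes v: "v \<in> V4" "v \<notin> X" and X: "X \<subseteq> V4" and ok: "okS (insert v X)"
  shows "card (Nb v \<inter> X) \<le> 1 \<and> card (Nb v \<inter> DS X) = 0"
proof
  have "Nb v \<inter> insert v X = Nb v \<inter> X" using v_notin_Nb by blast
  then show "card (Nb v \<inter> X) \<le> 1" using ok unfolding okS_def by force
next
  have "Nb v \<inter> DS X = {}"
  proof (rule ccontr)
    assume "Nb v \<inter> DS X \<noteq> {}"
    then obtain w y where w: "w \<in> Nb v" "w \<in> X" "y \<in> X" "aq_adj w y" unfolding DS_def by blast
    have "{y, v} \<subseteq> Nb w \<inter> insert v X"
      using w X v aq_adj_sym unfolding Nb_def by auto
    moreover have "y \<noteq> v" using w v by blast
    ultimately have "2 \<le> card (Nb w \<inter> insert v X)"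
      using finite_Nb by (metis card_2_iff card_mono finite_Int)
    moreover have "card (Nb w \<inter> insert v X) \<le> 1" using ok w unfolding okS_def by blast
    ultimately show False by simp
  qed
  then show "card (Nb v \<inter> DS X) = 0" by simp
qed


fun cnt :: "bool list \<Rightarrow> nat" where
  "cnt [] = 0" | "cnt (b#bs) = (if b then Suc (cnt bs) else cnt bs)"
fun vor :: "bool list \<Rightarrow> bool list \<Rightarrow> bool list" where
  "vor (a#as) (b#bs) = (a \<or> b) # vor as bs" | "vor _ _ = []"
fun vand :: "bool list \<Rightarrow> bool list \<Rightarrow> bool list" where
  "vand (a#as) (b#bs) = (a \<and> b) # vand as bs" | "vand _ _ = []"

type_synonym st = "bool list \<times> nat \<times> nat \<times> bool list \<times> bool list"

definition okv :: "bool list \<times> bool list \<times> bool list \<Rightarrow> st \<Rightarrow> bool" where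
  "okv vi s = (case vi of (u,c,n) \<Rightarrow> case s of (X,x,e,NX,D) \<Rightarrow>
     cnt (vand n X) \<le> 1 \<and> cnt (vand n D) = 0)"
definition addv :: "bool list \<times> bool list \<times> bool list \<Rightarrow> st \<Rightarrow> st" where
  "addv vi s = (case vi of (u,c,n) \<Rightarrow> case s of (X,x,e,NX,D) \<Rightarrow>
     (vor X u, Suc x, e + cnt (vand n X), vor NX c,
      if cnt (vand n X) = 0 then D else vor D (vor u (vand n X))))"
definition Qv :: "st \<Rightarrow> bool" where
  "Qv s = (case s of (X,x,e,NX,D) \<Rightarrow> (2 \<le> x \<longrightarrow> 2*x+7 \<le> e + cnt NX))"

fun srch :: "(bool list \<times> bool list \<times> bool list) list \<Rightarrow> st \<Rightarrow> bool"
and go :: "(bool list \<times> bool list \<times> bool list) list \<Rightarrow> st \<Rightarrow> bool" where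
  "srch [] s = True"
| "srch (vi # rest) s = (if okv vi s then go rest (addv vi s) \<and> srch rest s else srch rest s)"
| "go rest s = (Qv s \<and> srch rest s)"

definition tabL :: "bool list \<Rightarrow> bool list \<times> bool list \<times> bool list" where
  "tabL v = (map (\<lambda>w. w = v) vl, map (\<lambda>w. w = v \<or> aq_adj v w) vl, map (aq_adj v) vl)"

definition vec :: "bool list set \<Rightarrow> bool list" where "vec A = map (\<lambda>w. w \<in> A) vl"

definition stS :: "bool list set \<Rightarrow> st" where
  "stS X = (vec X, card X, eX X, vec (cN X), vec (DS X))"

lemma vor_map: "vor (map f xs) (map g xs) = map (\<lambda>x. f x \<or> g x) xs" by (induction xs) auto
lemma vand_map: "vand (map f xs) (map g xs) = map (\<lambda>x. f x \<and> g x) xs" by (induction xs) auto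
lemma cnt_map: "cnt (map f xs) = length (filter f xs)" by (induction xs) auto

lemma vec_or: "vor (vec A) (vec B) = vec (A \<union> B)" unfolding vec_def vor_map by simp
lemma vec_and: "vand (vec A) (vec B) = vec (A \<inter> B)" unfolding vec_def vand_map by simp
lemma cnt_vec: "cnt (vec A) = card (A \<inter> V4)"
proof -
  have "cnt (vec A) = length (filter (\<lambda>w. w \<in> A) vl)" unfolding vec_def cnt_map ..
  also have "\<dots> = card (set (filter (\<lambda>w. w \<in> A) vl))"
    using distinct_card[OF distinct_filter[OF distinct_vl]] by metis
  also have "set (filter (\<lambda>w. w \<in> A) vl) = A \<inter> V4" using set_vl by auto
  finally show ?thesis .
qed

lemma tabL_eq: assumes "v \<in> V4" shows "tabL v = (vec {v}, vec (cN {v}), vec (Nb v))"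
proof -
  have 1: "map (\<lambda>w. w = v) vl = vec {v}" unfolding vec_def by simp
  have 2: "map (\<lambda>w. w = v \<or> aq_adj v w) vl = vec (cN {v})" unfolding vec_def
    by (rule map_cong) (use set_vl in \<open>auto simp: cN_def\<close>)
  have 3: "map (aq_adj v) vl = vec (Nb v)" unfolding vec_def
    by (rule map_cong) (use set_vl in \<open>auto simp: Nb_def\<close>)
  show ?thesis unfolding tabL_def 1 2 3 ..
qed

lemma addv_st:
  assumes v: "v \<in> V4" "v \<notin> X" and X: "X \<subseteq> V4"
  shows "addv (tabL v) (stS X) = stS (insert v X)"
proof -
  have finX: "finite X" using finite_subset[OF X finite_V4] .
  have d: "cnt (vand (vec (Nb v)) (vec X)) = card (Nb v \<inter> X)"
    unfolding vec_and cnt_vec using Nb_sub by (metis inf.absorb_iff2 inf_commute inf_left_commute)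
  have d0: "(card (Nb v \<inter> X) = 0) = (Nb v \<inter> X = {})" using finite_Nb by simp
  have "vec (if Nb v \<inter> X = {} then DS X else DS X \<union> ({v} \<union> (Nb v \<inter> X))) =
        (if Nb v \<inter> X = {} then vec (DS X) else vor (vec (DS X)) (vor (vec {v}) (vand (vec (Nb v)) (vec X))))"
    by (simp add: vec_or vec_and)
  then show ?thesis
    unfolding addv_def tabL_eq[OF v(1)] stS_def
    using d d0 DS_insert[OF v X] eX_insert[OF v X] cN_insert[of v X] finX v(2)
    by (simp add: vec_or insert_commute)
qed

lemma okv_st:
  assumes v: "v \<in> V4" and X: "X \<subseteq> V4"
  shows "okv (tabL v) (stS X) = (card (Nb v \<inter> X) \<le> 1 \<and> card (Nb v \<inter> DS X) = 0)"
proof -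
  have 1: "cnt (vand (vec (Nb v)) (vec X)) = card (Nb v \<inter> X)"
    unfolding vec_and cnt_vec using Nb_sub by (metis inf.absorb_iff2 inf_commute inf_left_commute)
  have 2: "cnt (vand (vec (Nb v)) (vec (DS X))) = card (Nb v \<inter> DS X)"
    unfolding vec_and cnt_vec using Nb_sub by (metis inf.absorb_iff2 inf_commute inf_left_commute)
  show ?thesis unfolding okv_def tabL_eq[OF v] stS_def using 1 2 by simp
qed

lemma Qv_st: "Qv (stS X) = QS X"
proof -
  have "cnt (vec (cN X)) = card (cN X)" unfolding cnt_vec using cN_sub by (metis inf.absorb1)
  then show ?thesis unfolding Qv_def stS_def QS_def by simp
qed

lemma srch_sound:
  assumes "srch (map tabL vs) (stS X)" "distinct vs" "set vs \<subseteq> V4" "X \<subseteq> V4" "X \<inter> set vs = {}"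
  shows "\<forall>Y \<subseteq> set vs. Y \<noteq> {} \<longrightarrow> okS (X \<union> Y) \<longrightarrow> QS (X \<union> Y)"
  using assms
proof (induction vs arbitrary: X)
  case Nil then show ?case by simp
next
  case (Cons v vs)
  have v: "v \<in> V4" "v \<notin> X" using Cons.prems by auto
  have X: "X \<subseteq> V4" using Cons.prems by simp
  have rest: "srch (map tabL vs) (stS X)" using Cons.prems(1) by (auto split: if_splits)
  show ?case
  proof (intro allI impI)
    fix Y assume Y: "Y \<subseteq> set (v # vs)" "Y \<noteq> {}" "okS (X \<union> Y)"
    show "QS (X \<union> Y)"
    proof (cases "v \<in> Y")
      case False
      then have "Y \<subseteq> set vs" using Y by auto
      then show ?thesis using Cons.IH[OF rest] Cons.prems Y by auto
    next
      case True
      have ok: "okS (insert v X)" using okS_mono[OF Y(3)] True by blast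
      have "okv (tabL v) (stS X)" unfolding okv_st[OF v(1) X] using okS_insert[OF v X ok] .
      then have g: "go (map tabL vs) (stS (insert v X))"
        using Cons.prems(1) addv_st[OF v X] by simp
      then have q: "QS (insert v X)" and r: "srch (map tabL vs) (stS (insert v X))"
        using Qv_st by auto
      show ?thesis
      proof (cases "Y = {v}")
        case True then show ?thesis using q by simp
      next
        case False
        have Y': "Y - {v} \<subseteq> set vs" "Y - {v} \<noteq> {}" using Y False by auto
        have eq: "insert v X \<union> (Y - {v}) = X \<union> Y" using True by auto
        have d: "distinct vs" "set vs \<subseteq> V4" using Cons.prems by auto
        have iX: "insert v X \<subseteq> V4" "insert v X \<inter> set vs = {}" using Cons.prems v by auto
        have ih: "\<forall>Y \<subseteq> set vs. Y \<noteq> {} \<longrightarrow> okS (insert v X \<union> Y) \<longrightarrow> QS (insert v X \<union> Y)"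
          by (rule Cons.IH[OF r d iX])
        have "okS (insert v X \<union> (Y - {v}))" using eq Y(3) by simp
        then have "QS (insert v X \<union> (Y - {v}))" using ih Y' by blast
        then show ?thesis using eq by simp
      qed
    qed
  qed
qed

lemma srch_check: "srch (map tabL vl) (map (\<lambda>_. False) vl, 0, 0, map (\<lambda>_. False) vl, map (\<lambda>_. False) vl)"
  unfolding vl_def tabL_def by code_simp

lemma base_case:
  assumes "X \<subseteq> V4" "X \<noteq> {}" "okS X"
  shows "QS X"
proof -
  have e0: "eX {} = 0"
  proof -
    have "{e \<in> edges (AQ 4). e \<subseteq> {}} = {}" using E_form by blast
    then show ?thesis unfolding eX_def by simp
  qed
  have "stS {} = (map (\<lambda>_. False) vl, 0, 0, map (\<lambda>_. False) vl, map (\<lambda>_. False) vl)"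
    unfolding stS_def vec_def cN_def DS_def e0 by simp
  then have "srch (map tabL vl) (stS {})" using srch_check by simp
  from srch_sound[OF this distinct_vl] set_vl assms show ?thesis by auto
qed


lemma cN_mono: "A \<subseteq> B \<Longrightarrow> cN A \<subseteq> cN B" unfolding cN_def by blast

lemma E_ineq: "X \<subseteq> V4 \<Longrightarrow> 2 \<le> card X \<Longrightarrow> 2 * card X + 7 \<le> eX X + card (cN X)"
proof (induction "card X" arbitrary: X rule: less_induct)
  case less
  have finX: "finite X" using finite_subset[OF less.prems(1) finite_V4] .
  show ?case
  proof (cases "okS X")
    case True
    have "X \<noteq> {}" using less.prems(2) by auto
    then show ?thesis using base_case[OF less.prems(1) _ True] less.prems(2) unfolding QS_def by blast
  next
    case False
    then obtain v where v: "v \<in> X" "\<not> card (Nb v \<inter> X) \<le> 1" unfolding okS_def by blast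
    define X' where "X' = X - {v}"
    have sub: "Nb v \<inter> X \<subseteq> X'" unfolding X'_def using v_notin_Nb by blast
    have c2: "2 \<le> card X'" using card_mono[OF _ sub] finX v(2) unfolding X'_def by simp
    have cX': "card X' = card X - 1" unfolding X'_def using v(1) finX by simp
    have lt: "card X' < card X" using cX' c2 by simp
    have X'V: "X' \<subseteq> V4" using less.prems(1) unfolding X'_def by blast
    have ih: "2 * card X' + 7 \<le> eX X' + card (cN X')" by (rule less.hyps[OF lt X'V c2])
    have vV: "v \<in> V4" "v \<notin> X'" using v less.prems(1) unfolding X'_def by auto
    have ins: "insert v X' = X" using v(1) unfolding X'_def by blast
    have "eX X = eX X' + card (Nb v \<inter> X')" using eX_insert[OF vV X'V] ins by simp
    moreover have "Nb v \<inter> X' = Nb v \<inter> X" unfolding X'_def using v_notin_Nb by blast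
    moreover have "card (cN X') \<le> card (cN X)"
      using cN_mono[of X' X] cN_sub finite_V4 unfolding X'_def by (meson Diff_subset card_mono finite_subset)
    ultimately have "eX X' + 2 \<le> eX X" "card (cN X') \<le> card (cN X)" using v(2) by auto
    then show ?thesis using ih cX' c2 by linarith
  qed
qed

lemma verts_del: "verts (delete (AQ 4) FV FE) = V4 - FV"
  unfolding delete_def verts_def using verts_AQ unfolding verts_def by simp
lemma edges_del: "edges (delete (AQ 4) FV FE) = {e \<in> edges (AQ 4). e \<notin> FE \<and> e \<inter> FV = {}}"
  unfolding delete_def edges_def by simp

lemma cost_bound:
  assumes FV: "FV \<subseteq> V4" and FE: "FE \<subseteq> edges (AQ 4)" "finite FE"
    and X: "X \<subseteq> V4 - FV"
    and ind: "\<forall>x\<in>X. \<forall>y\<in>X. {x,y} \<notin> {e \<in> edges (AQ 4). e \<notin> FE \<and> e \<inter> FV = {}}"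
  shows "eX X + card (cN X - X) \<le> card FV + card FE
           + card {w. \<exists>u\<in>X. {u,w} \<in> {e \<in> edges (AQ 4). e \<notin> FE \<and> e \<inter> FV = {}}}"
proof -
  define EH where "EH = {e \<in> edges (AQ 4). e \<notin> FE \<and> e \<inter> FV = {}}"
  define NHX where "NHX = {w. \<exists>u\<in>X. {u,w} \<in> EH}"
  define A1 where "A1 = {e \<in> edges (AQ 4). e \<subseteq> X}"
  define D where "D = cN X - X"
  define B where "B = D \<inter> FV"
  define C where "C = D - FV - NHX"
  define p where "p = (\<lambda>w. SOME x. x \<in> X \<and> aq_adj x w)"
  define g where "g = (\<lambda>w. {p w, w})"
  have finFV: "finite FV" using finite_subset[OF FV finite_V4] .
  have finD: "finite D" unfolding D_def using finite_subset[OF cN_sub finite_V4] by simp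
  have NHXsub: "NHX \<subseteq> V4"
  proof
    fix w assume "w \<in> NHX"
    then obtain u where "{u,w} \<in> edges (AQ 4)" unfolding NHX_def EH_def by blast
    then show "w \<in> V4" using E_mem by blast
  qed
  have finNHX: "finite NHX" using finite_subset[OF NHXsub finite_V4] .
  have finC: "finite C" unfolding C_def using finD by simp
  have A1FE: "A1 \<subseteq> FE"
  proof
    fix e assume e: "e \<in> A1"
    then obtain a b where ab: "e = {a,b}" "e \<in> edges (AQ 4)" unfolding A1_def using E_form by blast
    have "a \<in> X" "b \<in> X" using e ab unfolding A1_def by auto
    moreover have "e \<inter> FV = {}" using e X unfolding A1_def by blast
    ultimately show "e \<in> FE" using ind ab by blast
  qed
  have pw: "p w \<in> X \<and> aq_adj (p w) w" if "w \<in> C" for w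
  proof -
    have "\<exists>x. x \<in> X \<and> aq_adj x w" using that unfolding C_def D_def cN_def by blast
    then show ?thesis unfolding p_def by (rule someI_ex)
  qed
  have gFE: "g ` C \<subseteq> FE"
  proof
    fix e assume "e \<in> g ` C"
    then obtain w where w: "w \<in> C" "e = {p w, w}" unfolding g_def by blast
    have wV: "w \<in> V4" "w \<notin> FV" "w \<notin> NHX" using w(1) cN_sub unfolding C_def D_def by auto
    have pV: "p w \<in> V4" "p w \<notin> FV" using pw[OF w(1)] X by auto
    have eE: "e \<in> edges (AQ 4)" using w(2) E_mem pw[OF w(1)] wV pV by blast
    have "e \<inter> FV = {}" using w(2) wV pV by blast
    show "e \<in> FE"
    proof (rule ccontr)
      assume "e \<notin> FE"
      then have "e \<in> EH" using eE \<open>e \<inter> FV = {}\<close> unfolding EH_def by blast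
      then have "w \<in> NHX" unfolding NHX_def using w(2) pw[OF w(1)] by blast
      then show False using wV by blast
    qed
  qed
  have disj: "A1 \<inter> g ` C = {}"
  proof -
    have "w \<notin> X" if "w \<in> C" for w using that unfolding C_def D_def by blast
    then show ?thesis unfolding A1_def g_def by blast
  qed
  have inj: "inj_on g C"
  proof
    fix w w' assume ww: "w \<in> C" "w' \<in> C" "g w = g w'"
    have "w \<notin> X" "w' \<notin> X" using ww unfolding C_def D_def by auto
    moreover have "p w \<in> X" "p w' \<in> X" using pw ww by auto
    moreover have "{p w, w} = {p w', w'}" using ww(3) unfolding g_def .
    ultimately show "w = w'" by (metis doubleton_eq_iff)
  qed
  have finA1: "finite A1" unfolding A1_def using finite_E by simp
  have "card A1 + card C = card (A1 \<union> g ` C)"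
    using card_Un_disjoint[OF finA1 _ disj] finC card_image[OF inj] by simp
  also have "\<dots> \<le> card FE" using A1FE gFE FE(2) by (intro card_mono) auto
  finally have 1: "card A1 + card C \<le> card FE" .
  have 2: "card B \<le> card FV" unfolding B_def using finFV by (intro card_mono) auto
  have "D \<subseteq> B \<union> C \<union> NHX" unfolding B_def C_def by blast
  then have "card D \<le> card (B \<union> C \<union> NHX)" using finD finC finNHX finFV unfolding B_def
    by (intro card_mono) auto
  also have "\<dots> \<le> card B + card C + card NHX" by (meson card_Un_le le_trans add_le_mono order_refl)
  finally have 3: "card D \<le> card B + card C + card NHX" .
  have "eX X = card A1" unfolding eX_def A1_def ..
  then show ?thesis using 1 2 3 unfolding D_def NHX_def EH_def by linarith
qed


lemma main_lemma:
  assumes FV: "FV \<subseteq> V4" and FE: "FE \<subseteq> edges (AQ 4)" "finite FE"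
    and sz: "card FV + card FE \<le> 7" and nf: "\<not> has_fpm (delete (AQ 4) FV FE)"
  shows "card FV + card FE = 7 \<and> has_isolated_vertex (delete (AQ 4) FV FE)"
proof -
  define H where "H = delete (AQ 4) FV FE"
  define EH where "EH = {e \<in> edges (AQ 4). e \<notin> FE \<and> e \<inter> FV = {}}"
  define W where "W = V4 - FV"
  have vH: "verts H = W" unfolding H_def W_def by (rule verts_del)
  have eH: "edges H = EH" unfolding H_def EH_def by (rule edges_del)
  have finW: "finite W" unfolding W_def using finite_V4 by simp
  have finEH: "finite EH" unfolding EH_def using finite_E by simp
  have two: "\<forall>e\<in>EH. \<exists>a b. a \<noteq> b \<and> e = {a,b} \<and> a \<in> W \<and> b \<in> W"
  proof
    fix e assume e: "e \<in> EH"
    then obtain a b where "e = {a,b}" "a \<noteq> b" "a \<in> V4" "b \<in> V4" using E_form unfolding EH_def by blast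
    moreover have "e \<inter> FV = {}" using e unfolding EH_def by blast
    ultimately show "\<exists>a b. a \<noteq> b \<and> e = {a,b} \<and> a \<in> W \<and> b \<in> W" unfolding W_def by blast
  qed
  define NH where "NH = (\<lambda>S. {w. \<exists>u\<in>S. {u,w} \<in> EH})"
  have NHsub: "NH S \<subseteq> W" for S
  proof
    fix w assume "w \<in> NH S"
    then obtain u where "{u,w} \<in> EH" unfolding NH_def by blast
    then obtain a b where ab: "{u,w} = {a,b}" "a \<in> W" "b \<in> W" using two by blast
    then show "w \<in> W" by (metis doubleton_eq_iff)
  qed
  have finNH: "finite (NH S)" for S using finite_subset[OF NHsub finW] .
  have "\<not> (\<forall>S\<subseteq>W. card S \<le> card (NH S))"
  proof
    assume "\<forall>S\<subseteq>W. card S \<le> card (NH S)"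
    then have "has_fpm H" using fpm_from_hallc[of H] vH eH finW finEH two unfolding NH_def by simp
    then show False using nf unfolding H_def by simp
  qed
  then obtain S where S: "S \<subseteq> W" "card (NH S) < card S" by (meson not_le)
  define X where "X = S - NH S"
  have finS: "finite S" using finite_subset[OF S(1) finW] .
  have XW: "X \<subseteq> W" unfolding X_def using S(1) by blast
  have ind: "\<forall>x\<in>X. \<forall>y\<in>X. {x,y} \<notin> EH"
  proof (intro ballI)
    fix x y assume "x \<in> X" "y \<in> X"
    then show "{x,y} \<notin> EH" unfolding X_def NH_def by blast
  qed
  have NHX: "NH X \<subseteq> NH S - S"
  proof
    fix w assume "w \<in> NH X"
    then obtain u where u: "u \<in> X" "{u,w} \<in> EH" unfolding NH_def by blast
    have "w \<in> NH S" using u unfolding X_def NH_def by blast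
    moreover have "w \<notin> S"
    proof
      assume "w \<in> S"
      then have "u \<in> NH S" using u(2) unfolding NH_def by (metis (mono_tags, lifting) insert_commute mem_Collect_eq)
      then show False using u(1) unfolding X_def by blast
    qed
    ultimately show "w \<in> NH S - S" by blast
  qed
  have cX: "card X = card S - card (S \<inter> NH S)" unfolding X_def using finS
    by (metis card_Diff_subset_Int finite_Int Diff_Int2 Diff_Diff_Int inf_commute)
  have c2: "card (NH S - S) = card (NH S) - card (NH S \<inter> S)"
    using finNH by (metis card_Diff_subset_Int finite_Int)
  have c3: "card (NH X) \<le> card (NH S - S)" using NHX finNH by (intro card_mono) auto
  have c4: "card (S \<inter> NH S) \<le> card (NH S)" using finNH by (intro card_mono) auto
  have lt: "card (NH X) < card X" using cX c2 c3 c4 S(2) by (simp add: inf_commute)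
  have XV: "X \<subseteq> V4 - FV" using XW unfolding W_def .
  have cost: "eX X + card (cN X - X) \<le> card FV + card FE + card (NH X)"
    using cost_bound[OF FV FE XV] ind unfolding NH_def EH_def by blast
  have finX: "finite X" using finite_subset[OF XW finW] .
  have XcN: "X \<subseteq> cN X" unfolding cN_def using XV by blast
  have cD: "card (cN X - X) = card (cN X) - card X"
    using XcN finX by (simp add: card_Diff_subset)
  have cNle: "card X \<le> card (cN X)" using XcN finite_subset[OF cN_sub finite_V4] by (rule card_mono[rotated])
  show ?thesis
  proof (cases "2 \<le> card X")
    case True
    have "2 * card X + 7 \<le> eX X + card (cN X)" using E_ineq[OF _ True] XV by blast
    then show ?thesis using cost cD cNle lt sz by linarith
  next
    case False
    then have "card X = 1" using lt by linarith
    then obtain v where Xv: "X = {v}" by (meson card_1_singletonE)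
    have NH0: "NH X = {}" using lt \<open>card X = 1\<close> finNH[of X] by simp
    have vV: "v \<in> V4" "v \<notin> FV" using Xv XV by auto
    have "cN X - X = Nb v" unfolding Xv cN_def Nb_def using aq_adj_irrefl vV by auto
    then have "card (cN X - X) = 7" using card_Nb[OF vV(1)] by simp
    then have eq7: "card FV + card FE = 7" using cost NH0 sz by simp
    have "has_isolated_vertex H"
      unfolding has_isolated_vertex_def
    proof
      show "v \<in> verts H" using vH vV unfolding W_def by simp
      show "\<forall>e\<in>edges H. v \<notin> e"
      proof (intro ballI notI)
        fix e assume e: "e \<in> edges H" "v \<in> e"
        then obtain a b where ab: "e = {a,b}" "a \<noteq> b" using eH two by blast
        then obtain w where "e = {v,w}" using e(2) by blast
        then have "w \<in> NH X" using e eH Xv unfolding NH_def by blast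
        then show False using NH0 by blast
      qed
    qed
    then show ?thesis using eq7 unfolding H_def by simp
  qed
qed




lemma degree_7: assumes v: "v \<in> V4" shows "degree (AQ 4) v = 7"
proof -
  have eq: "{e \<in> edges (AQ 4). v \<in> e} = (\<lambda>w. {v,w}) ` Nb v"
  proof (intro equalityI subsetI)
    fix e assume e: "e \<in> {e \<in> edges (AQ 4). v \<in> e}"
    then obtain a b where ab: "e = {a,b}" "a \<noteq> b" "a \<in> V4" "b \<in> V4" "aq_adj a b" using E_form by blast
    have "v = a \<or> v = b" using e ab by blast
    then show "e \<in> (\<lambda>w. {v,w}) ` Nb v"
    proof
      assume "v = a"
      then have "b \<in> Nb v" using ab unfolding Nb_def by simp
      then show ?thesis using ab \<open>v = a\<close> by blast
    next
      assume "v = b"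
      then have "a \<in> Nb v" using ab aq_adj_sym[of a b] unfolding Nb_def by simp
      moreover have "e = {v,a}" using ab \<open>v = b\<close> by blast
      ultimately show ?thesis by blast
    qed
  next
    fix e assume "e \<in> (\<lambda>w. {v,w}) ` Nb v"
    then obtain w where "w \<in> Nb v" "e = {v,w}" by blast
    then show "e \<in> {e \<in> edges (AQ 4). v \<in> e}" using E_mem v unfolding Nb_def by blast
  qed
  have inj: "inj_on (\<lambda>w. {v,w}) (Nb v)" unfolding inj_on_def using v_notin_Nb
    by (metis doubleton_eq_iff)
  show ?thesis unfolding degree_def eq card_image[OF inj] card_Nb[OF v] ..
qed

lemma min_degree_7: "min_degree (AQ 4) = 7"
proof -
  have "degree (AQ 4) ` V4 = {7}"
  proof -
    have "V4 \<noteq> {}" using set_vl unfolding vl_def by auto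
    then show ?thesis using degree_7 by auto
  qed
  then show ?thesis unfolding min_degree_def verts_AQ by simp
qed

lemma witness:
  "fsmp_set (AQ 4) {} {e \<in> edges (AQ 4). [False,False,False,False] \<in> e}
   \<and> card {e \<in> edges (AQ 4). [False,False,False,False] \<in> e} = 7"
proof -
  define v0 where "v0 = [False,False,False,False]"
  define FE where "FE = {e \<in> edges (AQ 4). v0 \<in> e}"
  have v0: "v0 \<in> V4" unfolding v0_def V4_def by simp
  have c: "card FE = 7" using degree_7[OF v0] unfolding degree_def FE_def .
  have "\<not> has_fpm (delete (AQ 4) {} FE)"
  proof
    assume "has_fpm (delete (AQ 4) {} FE)"
    then obtain f where f: "frac_perfect_matching (delete (AQ 4) {} FE) f" unfolding has_fpm_def by blast
    have vH: "v0 \<in> verts (delete (AQ 4) {} FE)" unfolding verts_del using v0 by blast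
    have emp: "{e \<in> edges (delete (AQ 4) {} FE). v0 \<in> e} = {}" unfolding edges_del FE_def by blast
    have "(\<Sum>e \<in> {e \<in> edges (delete (AQ 4) {} FE). v0 \<in> e}. f e) = 1"
      using f vH unfolding frac_perfect_matching_def by blast
    then show False unfolding emp by simp
  qed
  moreover have "FE \<subseteq> edges (AQ 4)" unfolding FE_def by blast
  moreover have "{} \<subseteq> verts (AQ 4)" by blast
  ultimately have "fsmp_set (AQ 4) {} FE" unfolding fsmp_set_def by blast
  then show ?thesis using c unfolding FE_def v0_def by blast
qed

lemma fsmp_7: "fsmp (AQ 4) = 7"
  unfolding fsmp_def
proof (rule Least_equality)
  show "\<exists>FV FE. fsmp_set (AQ 4) FV FE \<and> finite FV \<and> finite FE \<and> card FV + card FE = 7"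
  proof (intro exI conjI)
    show "fsmp_set (AQ 4) {} {e \<in> edges (AQ 4). [False,False,False,False] \<in> e}" using witness by blast
    show "finite {e \<in> edges (AQ 4). [False,False,False,False] \<in> e}" using finite_E by simp
    show "card ({}::bool list set) + card {e \<in> edges (AQ 4). [False,False,False,False] \<in> e} = 7"
      using witness by simp
  qed simp
next
  fix k assume "\<exists>FV FE. fsmp_set (AQ 4) FV FE \<and> finite FV \<and> finite FE \<and> card FV + card FE = k"
  then obtain FV FE where F: "fsmp_set (AQ 4) FV FE" "finite FE" "card FV + card FE = k" by blast
  show "7 \<le> k"
  proof (rule ccontr)
    assume "\<not> 7 \<le> k"
    then have "card FV + card FE \<le> 7" using F by simp
    then have "card FV + card FE = 7" using main_lemma F unfolding fsmp_set_def verts_AQ by blast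
    then show False using F \<open>\<not> 7 \<le> k\<close> by simp
  qed
qed

theorem lemma4p1:
  shows "frac_strongly_maximally_matched (AQ 4) \<and> frac_strongly_super_matched (AQ 4)
     \<and> fsmp (AQ 4) = 7
     \<and> (\<forall>FV FE. fsmp_set (AQ 4) FV FE \<and> finite FV \<and> finite FE \<and> card FV + card FE = 7
           \<longrightarrow> has_isolated_vertex (delete (AQ 4) FV FE))"
proof -
  have M: "frac_strongly_maximally_matched (AQ 4)"
    unfolding frac_strongly_maximally_matched_def fsmp_7 min_degree_7 ..
  have I: "\<forall>FV FE. fsmp_set (AQ 4) FV FE \<and> finite FV \<and> finite FE \<and> card FV + card FE = 7
           \<longrightarrow> has_isolated_vertex (delete (AQ 4) FV FE)"
    using main_lemma unfolding fsmp_set_def verts_AQ by auto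
  have S: "frac_strongly_super_matched (AQ 4)"
    unfolding frac_strongly_super_matched_def optimal_fsmp_set_def fsmp_7 using M I by blast
  show ?thesis using M S I fsmp_7 by blast
qed

end
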